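(* Let $p$ be a binary word of length $l$ whose maximum run size is $i$. Then $p$ does not have an internal zero at $l+1$ if and only if for every $j\in\{1,\dots,i\}$, $p$ has a run of size $j$.
   Context: $c_p(w)$ is the number of occurrences of $p$ as a (not necessarily consecutive) subsequence of $w$; $B_{n,p}(k)$ is the number of binary words of length $n$ with $c_p(w)=k$. A run is a maximal block of consecutive equal letters; its size is its length. $p$ has an internal zero at $n$ if there exist $0\le k_1<k_2<k_3$ with $B_{n,p}(k_1)\ne0$, $B_{n,p}(k_2)=0$, $B_{n,p}(k_3)\ne0$. *)

theory Defs
  imports Main
begin

definition occ :: "bool list \<Rightarrow> bool list \<Rightarrow> nat" where
  "occ p w = card {I. I \<subseteq> {0..<length w} \<and> card I = length p \<and> nths w I = p}"

definition B :: "nat \<Rightarrow> bool list \<Rightarrow> nat \<Rightarrow> nat" where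
  "B n p k = card {w :: bool list. length w = n \<and> occ p w = k}"

definition internal_zero :: "bool list \<Rightarrow> nat \<Rightarrow> bool" where
  "internal_zero p n \<longleftrightarrow>
     (\<exists>k1 k2 k3. k1 < k2 \<and> k2 < k3 \<and> B n p k1 \<noteq> 0 \<and> B n p k2 = 0 \<and> B n p k3 \<noteq> 0)"

text \<open>p has a run (maximal block of equal consecutive letters) of size j,
  occupying positions a, ..., a+j-1.\<close>
definition has_run :: "bool list \<Rightarrow> nat \<Rightarrow> bool" where
  "has_run p j \<longleftrightarrow> (\<exists>a. 1 \<le> j \<and> a + j \<le> length p \<and>
       (\<forall>k\<in>{a..<a+j}. p ! k = p ! a) \<and>
       (a = 0 \<or> p ! (a - 1) \<noteq> p ! a) \<and>
       (a + j = length p \<or> p ! (a + j) \<noteq> p ! a))"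

end

theory Submission
  imports Defs
begin

definition del :: "nat \<Rightarrow> 'a list \<Rightarrow> 'a list" where
  "del d w = take d w @ drop (Suc d) w"

lemma del_length: "d < length w \<Longrightarrow> length (del d w) = length w - 1"
  by (auto simp: del_def)

lemma del_nth: "d < length w \<Longrightarrow> t < length w - 1 \<Longrightarrow>
   del d w ! t = (if t < d then w!t else w ! Suc t)"
  by (auto simp: del_def nth_append min_def)

lemma del_eq_imp: "d < e \<Longrightarrow> e < length w \<Longrightarrow> del d w = del e w \<Longrightarrow> d \<le> k \<Longrightarrow> k < e
  \<Longrightarrow> w!k = w!Suc k"
proof -
  assume a: "d < e" "e < length w" "del d w = del e w" "d \<le> k" "k < e"
  have 1: "del d w ! k = w ! Suc k" using a(1,2,4,5) by (simp add: del_nth)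
  have 2: "del e w ! k = w ! k" using a(1,2,4,5) by (simp add: del_nth)
  show ?thesis using 1 2 a(3) by metis
qed

lemma del_Suc_eq: "Suc k < length w \<Longrightarrow> w!k = w!Suc k \<Longrightarrow> del k w = del (Suc k) w"
  apply (rule nth_equalityI)
   apply (simp add: del_length)
  apply (simp add: del_length del_nth)
  by (metis less_antisym)

lemma chain_eq: "(\<forall>k. d \<le> k \<longrightarrow> k < e \<longrightarrow> w!k = w!Suc k) \<Longrightarrow> d \<le> t \<Longrightarrow> t \<le> e \<Longrightarrow> w!t = w!d"
proof (induction t)
  case 0 then show ?case by simp
next
  case (Suc t) then show ?case by (metis le_SucE Suc_le_lessD less_imp_le_nat)
qed

lemma chain_del: "(\<forall>k. d \<le> k \<longrightarrow> k < e \<longrightarrow> w!k = w!Suc k) \<Longrightarrow> e < length w \<Longrightarrow> d \<le> t \<Longrightarrow> t \<le> e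
  \<Longrightarrow> del t w = del d w"
proof (induction t)
  case 0 then show ?case by simp
next
  case (Suc t)
  show ?case
  proof (cases "d = Suc t")
    case False
    then have "d \<le> t" using Suc by simp
    then have "del t w = del d w" using Suc by simp
    moreover have "del t w = del (Suc t) w" using Suc \<open>d \<le> t\<close> by (intro del_Suc_eq) auto
    ultimately show ?thesis by simp
  qed simp
qed

lemma nths_del: "d < length w \<Longrightarrow> nths w ({0..<length w} - {d}) = del d w"
proof -
  assume d: "d < length w"
  let ?A = "{0..<length w} - {d}"
  have w: "w = take d w @ (w!d # drop (Suc d) w)" using d by (simp add: Cons_nth_drop_Suc)
  have "nths w ?A = nths (take d w @ (w!d # drop (Suc d) w)) ?A" using w by simp
  also have "\<dots> = nths (take d w) ?A @ nths (w!d # drop (Suc d) w) {j. j + length (take d w) \<in> ?A}"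
    by (rule nths_append)
  also have "nths (take d w) ?A = take d w" using d by (intro nths_all) auto
  also have "nths (w!d # drop (Suc d) w) {j. j + length (take d w) \<in> ?A}
     = nths (drop (Suc d) w) {j. Suc j + length (take d w) \<in> ?A}"
    using d by (simp add: nths_Cons)
  also have "\<dots> = drop (Suc d) w" using d by (intro nths_all) auto
  finally show ?thesis by (simp add: del_def)
qed


lemma occ_card:
  assumes len: "length w = Suc (length p)"
  shows "occ p w = card {d. d < length w \<and> del d w = p}"
proof -
  let ?D = "{d. d < length w \<and> del d w = p}"
  let ?f = "\<lambda>d. {0..<length w} - {d}"
  have eq: "{I. I \<subseteq> {0..<length w} \<and> card I = length p \<and> nths w I = p} = ?f ` ?D"
  proof
    show "?f ` ?D \<subseteq> {I. I \<subseteq> {0..<length w} \<and> card I = length p \<and> nths w I = p}"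
    proof
      fix I assume "I \<in> ?f ` ?D"
      then obtain d where d: "d < length w" "del d w = p" "I = ?f d" by auto
      have "card I = length p" using d(1,3) len by simp
      then show "I \<in> {I. I \<subseteq> {0..<length w} \<and> card I = length p \<and> nths w I = p}"
        using d nths_del[OF d(1)] by auto
    qed
  next
    show "{I. I \<subseteq> {0..<length w} \<and> card I = length p \<and> nths w I = p} \<subseteq> ?f ` ?D"
    proof
      fix I assume "I \<in> {I. I \<subseteq> {0..<length w} \<and> card I = length p \<and> nths w I = p}"
      then have I: "I \<subseteq> {0..<length w}" "card I = length p" "nths w I = p" by auto
      have "I \<noteq> {0..<length w}"
      proof
        assume "I = {0..<length w}"
        then have "card I = length w" by simp
        then show False using I(2) len by simp
      qed
      then obtain d where d: "d < length w" "d \<notin> I" using I(1) by (metis atLeastLessThan_iff subsetI subset_antisym zero_le)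
      have sub: "I \<subseteq> ?f d" using I(1) d by auto
      have "card (?f d) = length p" using d len by simp
      then have "I = ?f d" using sub I(2) by (intro card_subset_eq) auto
      then show "I \<in> ?f ` ?D" using d I(3) nths_del[of d w] by auto
    qed
  qed
  have inj: "inj_on ?f ?D"
  proof (rule inj_onI)
    fix x y assume x: "x \<in> ?D" and y: "y \<in> ?D" and e: "?f x = ?f y"
    have "x \<notin> ?f x" by simp
    then have "x \<notin> ?f y" using e by simp
    then show "x = y" using x by simp
  qed
  have "occ p w = card (?f ` ?D)" unfolding occ_def using eq by simp
  also have "\<dots> = card ?D" by (rule card_image[OF inj])
  finally show ?thesis .
qed

lemma occ_analysis:
  assumes len: "length w = Suc (length p)"
    and ne: "{d. d < length w \<and> del d w = p} \<noteq> {}"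
  shows "card {d. d < length w \<and> del d w = p} = 1 \<or>
     (card {d. d < length w \<and> del d w = p} \<ge> 2 \<and> has_run p (card {d. d < length w \<and> del d w = p} - 1))"
proof -
  define D where "D = {d. d < length w \<and> del d w = p}"
  have fin: "finite D" unfolding D_def by (rule finite_subset[of _ "{..<length w}"]) auto
  have neD: "D \<noteq> {}" using ne D_def by simp
  define a where "a = Min D"
  define b where "b = Max D"
  have aD: "a \<in> D" using fin neD a_def by simp
  have bD: "b \<in> D" using fin neD b_def by simp
  have amin: "\<And>e. e \<in> D \<Longrightarrow> a \<le> e" using fin a_def by simp
  have bmax: "\<And>e. e \<in> D \<Longrightarrow> e \<le> b" using fin b_def by simp
  have ab: "a \<le> b" using amin bD by simp
  have blen: "b < length w" using bD D_def by simp
  have dela: "del a w = p" using aD D_def by simp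
  have delb: "del b w = p" using bD D_def by simp
  have H: "\<forall>k. a \<le> k \<longrightarrow> k < b \<longrightarrow> w!k = w!Suc k"
  proof (cases "a = b")
    case False
    then have "a < b" using ab by simp
    then show ?thesis using del_eq_imp[of a b w] blen dela delb by auto
  qed simp
  have Deq: "D = {a..b}"
  proof
    show "D \<subseteq> {a..b}" using amin bmax by auto
    show "{a..b} \<subseteq> D"
    proof
      fix t assume "t \<in> {a..b}"
      then have "a \<le> t" "t \<le> b" by auto
      then have "del t w = del a w" by (rule chain_del[OF H blen])
      then show "t \<in> D" using dela \<open>t \<in> {a..b}\<close> blen unfolding D_def by auto
    qed
  qed
  have cardD: "card D = Suc (b - a)" using Deq ab by simp
  show ?thesis
  proof (cases "a = b")
    case True then show ?thesis using cardD D_def by simp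
  next
    case False
    then have altb: "a < b" using ab by simp
    have lp: "b \<le> length p" using blen len by simp
    have alen: "a < length w" using altb blen by simp
    have pn: "\<And>t. t < length p \<Longrightarrow> p ! t = (if t < a then w!t else w ! Suc t)"
      using dela del_nth[OF alen] len by (metis diff_Suc_1)
    have wa: "\<And>t. a \<le> t \<Longrightarrow> t \<le> b \<Longrightarrow> w!t = w!a" by (rule chain_eq[OF H])
    have pa: "p ! a = w ! a" using pn[of a] altb lp wa[of "Suc a"] by simp
    have run: "has_run p (b - a)"
      unfolding has_run_def
    proof (intro exI[of _ a] conjI)
      show "1 \<le> b - a" using altb by simp
      show "a + (b - a) \<le> length p" using altb lp by simp
      show "\<forall>k\<in>{a..<a + (b - a)}. p ! k = p ! a"
      proof
        fix k assume k: "k \<in> {a..<a + (b - a)}"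
        then have "p ! k = w ! Suc k" using pn[of k] lp by auto
        also have "\<dots> = w ! a" using wa[of "Suc k"] k by auto
        finally show "p ! k = p ! a" using pa by simp
      qed
      show "a = 0 \<or> p ! (a - 1) \<noteq> p ! a"
      proof (rule ccontr)
        assume c: "\<not> (a = 0 \<or> p ! (a - 1) \<noteq> p ! a)"
        then have "p ! (a - 1) = w ! (a - 1)" using pn[of "a - 1"] altb lp by auto
        then have eqw: "w ! (a - 1) = w ! Suc (a - 1)" using c pa by simp
        have "del (a - 1) w = del (Suc (a - 1)) w" using eqw alen c by (intro del_Suc_eq) auto
        then have "a - 1 \<in> D" using dela c alen D_def by simp
        then have "a \<le> a - 1" by (rule amin)
        moreover have "a \<noteq> 0" using c by auto
        ultimately show False by simp
      qed
      show "a + (b - a) = length p \<or> p ! (a + (b - a)) \<noteq> p ! a"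
      proof (rule ccontr)
        assume c: "\<not> (a + (b - a) = length p \<or> p ! (a + (b - a)) \<noteq> p ! a)"
        then have bl: "b < length p" using lp altb by simp
        have "p ! b = w ! Suc b" using pn[of b] bl altb by simp
        then have eqw: "w ! b = w ! Suc b" using c pa wa[of b] altb by simp
        have "del b w = del (Suc b) w" using eqw bl len by (intro del_Suc_eq) auto
        then have "Suc b \<in> D" using delb bl len D_def by simp
        then have "Suc b \<le> b" by (rule bmax)
        then show False by simp
      qed
    qed
    show ?thesis using run cardD altb D_def by simp
  qed
qed


lemma exists_one:
  assumes ne: "p \<noteq> []"
  shows "\<exists>w. length w = Suc (length p) \<and> occ p w = 1"
proof -
  define w where "w = (\<not> p!0) # p"
  have len: "length w = Suc (length p)" using w_def by simp
  have "{d. d < length w \<and> del d w = p} = {0}"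
  proof
    show "{0} \<subseteq> {d. d < length w \<and> del d w = p}" using w_def by (simp add: del_def)
    show "{d. d < length w \<and> del d w = p} \<subseteq> {0}"
    proof
      fix e assume e: "e \<in> {d. d < length w \<and> del d w = p}"
      show "e \<in> {0}"
      proof (rule ccontr)
        assume "e \<notin> {0}"
        then have "0 < e" by simp
        moreover have "del 0 w = p" using w_def by (simp add: del_def)
        ultimately have "w!0 = w!Suc 0" using del_eq_imp[of 0 e w 0] e by simp
        then show False using w_def by simp
      qed
    qed
  qed
  then show ?thesis using len occ_card[OF len] by auto
qed

lemma exists_run:
  assumes r: "has_run p j"
  shows "\<exists>w. length w = Suc (length p) \<and> occ p w = Suc j"
proof -
  obtain a where a: "1 \<le> j" "a + j \<le> length p" "\<forall>k\<in>{a..<a+j}. p ! k = p ! a"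
       "a = 0 \<or> p ! (a - 1) \<noteq> p ! a" "a + j = length p \<or> p ! (a + j) \<noteq> p ! a"
    using r unfolding has_run_def by blast
  have al: "a < length p" using a(1,2) by simp
  define w where "w = take (Suc a) p @ drop a p"
  have len: "length w = Suc (length p)" using w_def al by simp
  have lt: "length (take (Suc a) p) = Suc a" using al by simp
  have wn: "w ! t = (if t \<le> a then p!t else p!(t - 1))" if t: "t < Suc (length p)" for t
  proof (cases "t \<le> a")
    case True then show ?thesis using lt by (simp add: w_def nth_append)
  next
    case False
    then have "w!t = drop a p ! (t - Suc a)" using lt by (simp add: w_def nth_append)
    also have "\<dots> = p ! (t - 1)" using False t al by simp
    finally show ?thesis using False by simp
  qed
  have dela: "del a w = p" using al by (simp add: del_def w_def)
  have runp: "p!k = p!a" if "a \<le> k" "k < a + j" for k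
  proof -
    have "k \<in> {a..<a+j}" using that by simp
    then show ?thesis using a(3) by blast
  qed
  have H: "\<forall>k. a \<le> k \<longrightarrow> k < a + j \<longrightarrow> w!k = w!Suc k"
  proof (intro allI impI)
    fix k assume k: "a \<le> k" "k < a + j"
    have 1: "w ! Suc k = p ! k" using wn[of "Suc k"] k a(2) by simp
    have 2: "w ! k = p ! a"
    proof (cases "k = a")
      case True then show ?thesis using wn[of k] al by simp
    next
      case False
      then have "w ! k = p ! (k - 1)" using wn[of k] k a(2) by simp
      then show ?thesis using runp[of "k - 1"] k False by simp
    qed
    show "w!k = w!Suc k" using 1 2 runp[of k] k by simp
  qed
  have ajl: "a + j < length w" using len a(2) by simp
  have "{d. d < length w \<and> del d w = p} = {a..a+j}"
  proof
    show "{a..a+j} \<subseteq> {d. d < length w \<and> del d w = p}"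
    proof
      fix t assume t: "t \<in> {a..a+j}"
      then have "a \<le> t" "t \<le> a + j" by auto
      then have "del t w = del a w" by (rule chain_del[OF H ajl])
      then show "t \<in> {d. d < length w \<and> del d w = p}" using dela t ajl by auto
    qed
    show "{d. d < length w \<and> del d w = p} \<subseteq> {a..a+j}"
    proof
      fix e assume e: "e \<in> {d. d < length w \<and> del d w = p}"
      show "e \<in> {a..a+j}"
      proof (rule ccontr)
        assume "e \<notin> {a..a+j}"
        then consider "e < a" | "a + j < e" by auto
        then show False
        proof cases
          case 1
          then have "w!(a-1) = w!Suc (a-1)" using del_eq_imp[of e a w "a - 1"] e dela al len by auto
          moreover have "w!(a-1) = p!(a-1)" using wn[of "a-1"] al by simp
          moreover have "w!Suc(a-1) = p!a" using wn[of a] al 1 by simp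
          ultimately show False using a(4) 1 by simp
        next
          case 2
          then have "w!(a+j) = w!Suc (a+j)" using del_eq_imp[of a e w "a+j"] e dela al by auto
          moreover have "w!(a+j) = p!(a+j-1)" using wn[of "a+j"] a(1,2) by simp
          moreover have "p!(a+j-1) = p!a" using runp[of "a+j-1"] a(1) by simp
          moreover have "w!Suc(a+j) = p!(a+j)" using wn[of "Suc (a+j)"] 2 e len by simp
          moreover have "a + j < length p" using 2 e len by simp
          ultimately show False using a(5) by simp
        qed
      qed
    qed
  qed
  then show ?thesis using len occ_card[OF len] by auto
qed

lemma B_ne: "B n p k \<noteq> 0 \<longleftrightarrow> (\<exists>w. length w = n \<and> occ p w = k)"
proof -
  have "finite {w :: bool list. length w = n}"
    using finite_lists_length_eq[of "UNIV :: bool set" n] by simp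
  then have "finite {w :: bool list. length w = n \<and> occ p w = k}"
    by (rule finite_subset[rotated]) auto
  then show ?thesis unfolding B_def by auto
qed

lemma occ_values:
  assumes len: "length w = Suc (length p)" and pos: "occ p w \<noteq> 0"
  shows "occ p w = 1 \<or> (occ p w \<ge> 2 \<and> has_run p (occ p w - 1))"
proof -
  have "{d. d < length w \<and> del d w = p} \<noteq> {}" using pos occ_card[OF len] by auto
  then show ?thesis using occ_analysis[OF len] occ_card[OF len] by simp
qed

theorem mainTheorem12:
  fixes p :: "bool list" and l i :: nat
  assumes "length p = l"
    and "has_run p i" and "\<forall>j. has_run p j \<longrightarrow> j \<le> i"
  shows "\<not> internal_zero p (l + 1) \<longleftrightarrow> (\<forall>j\<in>{1..i}. has_run p j)"
proof
  have i1: "1 \<le> i" using assms(2) unfolding has_run_def by blast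
  have pne: "p \<noteq> []" using assms(2) unfolding has_run_def by auto
  {
    assume nz: "\<not> internal_zero p (l + 1)"
    show "\<forall>j\<in>{1..i}. has_run p j"
    proof
      fix j assume j: "j \<in> {1..i}"
      show "has_run p j"
      proof (rule ccontr)
        assume nr: "\<not> has_run p j"
        then have "j < i" using j assms(2) by (metis atLeastAtMost_iff le_neq_implies_less)
        have b1: "B (l+1) p 1 \<noteq> 0" using exists_one[OF pne] assms(1) B_ne by simp
        have b3: "B (l+1) p (Suc i) \<noteq> 0" using exists_run[OF assms(2)] assms(1) B_ne by simp
        have b2: "B (l+1) p (Suc j) = 0"
        proof (rule ccontr)
          assume "B (l+1) p (Suc j) \<noteq> 0"
          then obtain w where w: "length w = l + 1" "occ p w = Suc j" using B_ne by blast
          have "occ p w = 1 \<or> (occ p w \<ge> 2 \<and> has_run p (occ p w - 1))"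
            using occ_values[of w p] w assms(1) by simp
          then show False using w nr j by auto
        qed
        have "internal_zero p (l+1)" unfolding internal_zero_def
          using b1 b2 b3 j \<open>j < i\<close> by (intro exI[of _ 1] exI[of _ "Suc j"] exI[of _ "Suc i"]) auto
        then show False using nz by simp
      qed
    qed
  }
  {
    assume allr: "\<forall>j\<in>{1..i}. has_run p j"
    show "\<not> internal_zero p (l + 1)"
    proof
      assume "internal_zero p (l + 1)"
      then obtain k1 k2 k3 where k: "k1 < k2" "k2 < k3" "B (l+1) p k1 \<noteq> 0" "B (l+1) p k2 = 0"
        "B (l+1) p k3 \<noteq> 0" unfolding internal_zero_def by blast
      obtain w where w: "length w = l + 1" "occ p w = k3" using k(5) B_ne by blast
      have "occ p w = 1 \<or> (occ p w \<ge> 2 \<and> has_run p (occ p w - 1))"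
        using occ_values[of w p] w assms(1) k by simp
      then have k3i: "k3 \<le> Suc i" using w assms(3) i1 by auto
      show False
      proof (cases "k2 = 1")
        case True
        then show False using exists_one[OF pne] assms(1) B_ne[of "l+1" p 1] k(4) by simp
      next
        case False
        then have "k2 - 1 \<in> {1..i}" using k k3i by auto
        then have "has_run p (k2 - 1)" using allr by blast
        from exists_run[OF this] have "\<exists>w. length w = l + 1 \<and> occ p w = k2"
          using False k assms(1) by (metis Suc_diff_1 Suc_eq_plus1 gr_zeroI less_nat_zero_code)
        then show False using B_ne k(4) by blast
      qed
    qed
  }
qed

end
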